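(* Let $L\ge1$, $D\ge1$, and for $\mathbf{u}=[\mathbf{u}_l]_{l=1}^L$ with $\mathbf{u}_l\in\mathbb{R}^D$ let $\mathcal{P}_{conv}(\mathbf{u})\in\mathbb{R}^D$ be the vector with $\langle\mathbf{x},\mathcal{P}_{conv}(\mathbf{u})\rangle=\big((((\mathbf{x}\star\mathbf{u}_1)\star\mathbf{u}_2)\cdots)\star\mathbf{u}_{L-1}\big)^\top\mathbf{u}_L$ for all $\mathbf{x}\in\mathbb{R}^D$. Then for every $\mathbf{w}\in\mathbb{R}^D$, $$\mathcal{R}_{\mathcal{P}_{conv}}(\mathbf{w}):=\min_{\mathbf{u}:\mathcal{P}_{conv}(\mathbf{u})=\mathbf{w}}\|\mathbf{u}\|_2^2=L\|\hat{\mathbf{w}}\|_{2/L}^{2/L}.$$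
   Context: Indices run over $0,\dots,D-1$. $(\mathbf{h}\star\mathbf{u})[d]=\frac{1}{\sqrt D}\sum_{k=0}^{D-1}\mathbf{u}[k]\mathbf{h}[(d+k)\bmod D]$. $\hat{\mathbf{w}}[d]=\frac{1}{\sqrt D}\sum_{p=0}^{D-1}\mathbf{w}[p]e^{-2\pi\mathrm{i}pd/D}$. $\|\mathbf{u}\|_2^2=\sum_l\|\mathbf{u}_l\|_2^2$; for $p>0$ and $\mathbf{z}\in\mathbb{C}^D$, $\|\mathbf{z}\|_p=(\sum_d|\mathbf{z}[d]|^p)^{1/p}$. *)

theory Defs
  imports "HOL-Analysis.Analysis"
begin

text \<open>Vectors in R^D are functions nat => real, only indices 0..D-1 matter.
  A tuple u = [u_l]_{l=1..L} is a function nat => (nat => real), with l ranging over 1..L.\<close>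

definition ccorr :: "nat \<Rightarrow> (nat \<Rightarrow> real) \<Rightarrow> (nat \<Rightarrow> real) \<Rightarrow> (nat \<Rightarrow> real)" where
  "ccorr D h u = (\<lambda>d. (1 / sqrt (real D)) * (\<Sum>k<D. u k * h ((d + k) mod D)))"

fun citer :: "nat \<Rightarrow> (nat \<Rightarrow> nat \<Rightarrow> real) \<Rightarrow> (nat \<Rightarrow> real) \<Rightarrow> nat \<Rightarrow> (nat \<Rightarrow> real)" where
  "citer D u x 0 = x"
| "citer D u x (Suc l) = ccorr D (citer D u x l) (u (Suc l))"

definition vinner :: "nat \<Rightarrow> (nat \<Rightarrow> real) \<Rightarrow> (nat \<Rightarrow> real) \<Rightarrow> real" where
  "vinner D x y = (\<Sum>d<D. x d * y d)"

definition Pconv :: "nat \<Rightarrow> nat \<Rightarrow> (nat \<Rightarrow> nat \<Rightarrow> real) \<Rightarrow> (nat \<Rightarrow> real)" where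
  "Pconv D L u = (THE p. (\<forall>d\<ge>D. p d = 0) \<and>
      (\<forall>x. vinner D x p = vinner D (citer D u x (L - 1)) (u L)))"

definition sqnorm_tuple :: "nat \<Rightarrow> nat \<Rightarrow> (nat \<Rightarrow> nat \<Rightarrow> real) \<Rightarrow> real" where
  "sqnorm_tuple D L u = (\<Sum>l\<in>{1..L}. \<Sum>d<D. (u l d)\<^sup>2)"

definition dft :: "nat \<Rightarrow> (nat \<Rightarrow> real) \<Rightarrow> (nat \<Rightarrow> complex)" where
  "dft D w = (\<lambda>d. (1 / sqrt (real D)) *
      (\<Sum>p<D. complex_of_real (w p) * exp (- 2 * pi * \<i> * of_nat p * of_nat d / of_nat D)))"

definition pnorm_pow :: "nat \<Rightarrow> real \<Rightarrow> (nat \<Rightarrow> complex) \<Rightarrow> real" where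
  "pnorm_pow D p z = (\<Sum>d<D. cmod (z d) powr p)"

end

theory Submission
  imports Defs
begin


definition Ec :: "nat \<Rightarrow> int \<Rightarrow> complex" where
  "Ec D k = exp (2 * of_real pi * \<i> * of_int k / of_nat D)"

lemma Ec_add: "Ec D (a + b) = Ec D a * Ec D b"
  unfolding Ec_def by (simp add: exp_add[symmetric] add_divide_distrib distrib_left distrib_right)

lemma Ec_0[simp]: "Ec D 0 = 1" unfolding Ec_def by simp

lemma Ec_mult_D: assumes "D > 0" shows "Ec D (int D * t) = 1"
proof -
  have "2 * of_real pi * \<i> * of_int (int D * t) / of_nat D = \<i> * (of_int t * (of_real pi * 2))"
    using assms by (simp add: field_simps)
  then show ?thesis unfolding Ec_def by simp
qed

lemma Ec_cong: assumes "D > 0" "a mod int D = b mod int D" shows "Ec D a = Ec D b"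
proof -
  have "int D dvd a - b" using assms(2) by (simp add: mod_eq_dvd_iff)
  then obtain t where "a = b + int D * t" by (metis add.commute diff_add_cancel dvdE)
  then show ?thesis using Ec_add Ec_mult_D[OF assms(1)] by simp
qed

lemma Ec_cnj: "cnj (Ec D k) = Ec D (- k)"
  unfolding Ec_def by (simp add: exp_cnj)

lemma Ec_pow: "Ec D k ^ m = Ec D (int m * k)"
  by (induction m) (simp_all add: Ec_add[symmetric] algebra_simps)

lemma Ec_eq_1: assumes "D > 0" shows "Ec D k = 1 \<longleftrightarrow> int D dvd k"
proof
  assume "int D dvd k" then obtain t where "k = int D * t" by blast
  then show "Ec D k = 1" using Ec_mult_D[OF assms] by simp
next
  assume h: "Ec D k = 1"
  define r where "r = k mod int D"
  have r: "0 \<le> r" "r < int D" using assms by (simp_all add: r_def)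
  have "Ec D r = Ec D k" using assms by (intro Ec_cong) (simp_all add: r_def)
  with h have "exp (2 * of_real pi * \<i> * of_int r / of_nat D) = 1" by (simp add: Ec_def)
  then obtain n :: int where n: "Im (2 * of_real pi * \<i> * of_int r / of_nat D) = of_int (2 * n) * pi"
    by (auto simp: exp_eq_1)
  have "2 * pi * r / D = 2 * n * pi" using n by simp
  then have "real_of_int r = real D * n" using assms by (simp add: field_simps)
  then have "r = int D * n" by (metis of_int_eq_iff of_int_mult of_int_of_nat_eq)
  with r have "r = 0"
    by (metis mult_less_cancel_left_pos mult.right_neutral mult_eq_0_iff not_less of_nat_0_less_iff assms
        int_one_le_iff_zero_less mult_le_cancel_left1 zero_less_mult_iff linorder_neqE_linordered_idom)
  then show "int D dvd k" by (simp add: r_def dvd_eq_mod_eq_0)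
qed

lemma orth: assumes "D > 0"
  shows "(\<Sum>m<D. Ec D (int m * k)) = (if int D dvd k then of_nat D else 0)"
proof -
  have "(\<Sum>m<D. Ec D (int m * k)) = (\<Sum>m<D. Ec D k ^ m)" by (simp add: Ec_pow)
  also have "\<dots> = (if int D dvd k then of_nat D else 0)"
  proof (cases "int D dvd k")
    case True then show ?thesis using Ec_eq_1[OF assms] by (simp add: sum_gp_strict)
  next
    case False
    have "Ec D k ^ D = 1" using Ec_pow Ec_mult_D[OF assms] by (metis mult.commute Ec_eq_1[OF assms] dvd_triv_left)
    then show ?thesis using False Ec_eq_1[OF assms] by (simp add: sum_gp_strict)
  qed
  finally show ?thesis .
qed


definition Fr :: "nat \<Rightarrow> (nat \<Rightarrow> real) \<Rightarrow> nat \<Rightarrow> complex" where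
  "Fr D v m = of_real (1 / sqrt (real D)) * (\<Sum>p<D. of_real (v p) * Ec D (- (int p * int m)))"
definition Gr :: "nat \<Rightarrow> (nat \<Rightarrow> real) \<Rightarrow> nat \<Rightarrow> complex" where
  "Gr D v m = of_real (1 / sqrt (real D)) * (\<Sum>p<D. of_real (v p) * Ec D (int p * int m))"

lemma dft_eq: "dft D w = Fr D w"
  unfolding dft_def Fr_def Ec_def by (rule ext) (simp add: algebra_simps)

lemma Gr_cnj: "Gr D v m = cnj (Fr D v m)"
  unfolding Gr_def Fr_def by (simp add: Ec_cnj)

lemma Fr_cong: "(\<And>d. d < D \<Longrightarrow> v d = v' d) \<Longrightarrow> Fr D v m = Fr D v' m"
  unfolding Fr_def by simp

lemma Ec_refl: assumes "D > 0" "m < D"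
  shows "Ec D (int a * int ((D - m) mod D)) = Ec D (- (int a * int m))"
proof (cases "m = 0")
  case True then show ?thesis by simp
next
  case False
  then have "(D - m) mod D = D - m" using assms by simp
  moreover have "int a * int (D - m) = - (int a * int m) + int D * int a"
    using assms by (simp add: of_nat_diff algebra_simps)
  ultimately have "Ec D (int a * int ((D - m) mod D)) = Ec D (- (int a * int m) + int D * int a)"
    by simp
  also have "\<dots> = Ec D (- (int a * int m))" by (simp only: Ec_add Ec_mult_D[OF assms(1)]) simp
  finally show ?thesis .
qed

lemma Fr_herm: assumes "D > 0" "m < D" shows "Fr D v ((D - m) mod D) = cnj (Fr D v m)"
proof -
  have "Ec D (- (int p * int ((D - m) mod D))) = Ec D (int p * int m)" for p
    using Ec_refl[OF assms, of p] Ec_cnj by (metis minus_minus)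
  then show ?thesis unfolding Gr_cnj[symmetric] Fr_def Gr_def by (simp add: Ec_cnj)
qed

lemma refl_inv: assumes "a < (D::nat)" shows "(D - (D - a) mod D) mod D = a"
proof (cases "a = 0")
  case True then show ?thesis by simp
next
  case False then have "(D - a) mod D = D - a" using assms by simp
  then show ?thesis using assms by simp
qed

lemma sum_shift: fixes f :: "nat \<Rightarrow> 'a::comm_monoid_add" assumes "D > 0" shows "(\<Sum>d<D. f ((d + k) mod D)) = (\<Sum>j<D. f j)"
proof -
  have inj: "inj_on (\<lambda>d. (d + k) mod D) {..<D}"
  proof (rule inj_onI)
    fix d d' :: nat assume d: "d \<in> {..<D}" "d' \<in> {..<D}" and e: "(d + k) mod D = (d' + k) mod D"
    have "int ((d + k) mod D) = int ((d' + k) mod D)" using e by simp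
    then have "(int d + int k) mod int D = (int d' + int k) mod int D" by (simp add: of_nat_mod)
    then have "int D dvd (int d + int k) - (int d' + int k)" by (simp add: mod_eq_dvd_iff)
    then have dv: "int D dvd int d - int d'" by simp
    show "d = d'"
    proof (rule ccontr)
      assume "d \<noteq> d'"
      then have "\<bar>int D\<bar> \<le> \<bar>int d - int d'\<bar>" using dvd_imp_le_int[of "int d - int d'" "int D"] dv by simp
      then show False using d by auto
    qed
  qed
  have "(\<lambda>d. (d + k) mod D) ` {..<D} = {..<D}"
    by (rule endo_inj_surj) (use inj assms in auto)
  then have "bij_betw (\<lambda>d. (d + k) mod D) {..<D} {..<D}" using inj by (simp add: bij_betw_def)
  then show ?thesis by (rule sum.reindex_bij_betw)
qed

lemma sum_refl: fixes f :: "nat \<Rightarrow> 'a::comm_monoid_add" assumes "D > 0" shows "(\<Sum>m<D. f ((D - m) mod D)) = (\<Sum>m<D. f m)"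
proof (rule sum.reindex_bij_witness[where i="\<lambda>m. (D - m) mod D" and j="\<lambda>m. (D - m) mod D"])
  fix a assume "a \<in> {..<D}"
  then show "(D - (D - a) mod D) mod D = a" by (intro refl_inv) simp
next
  fix a assume "a \<in> {..<D}"
  then show "(D - (D - a) mod D) mod D = a" by (intro refl_inv) simp
qed (use assms in auto)


lemma dvd_lt: assumes "j < D" "k < D" shows "int D dvd (int j - int k) \<longleftrightarrow> j = k"
proof
  assume dv: "int D dvd (int j - int k)"
  show "j = k"
  proof (rule ccontr)
    assume "j \<noteq> k"
    then have "\<bar>int D\<bar> \<le> \<bar>int j - int k\<bar>" using dvd_imp_le_int[of "int j - int k" "int D"] dv by simp
    then show False using assms by auto
  qed
qed simp

lemma c_sq: assumes "D > 0"
  shows "complex_of_real (1 / sqrt (real D)) * complex_of_real (1 / sqrt (real D)) = of_real (1 / real D)"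
  using assms by (simp flip: of_real_mult)

lemma orth2: assumes "D > 0" "j < D" "k < D"
  shows "(\<Sum>m<D. Ec D (int m * (int j - int k))) = (if j = k then of_nat D else 0)"
  using orth[OF assms(1)] dvd_lt[OF assms(2,3)] by simp

lemma swap3: "(\<Sum>m<D. \<Sum>j<D. \<Sum>k<D. f m j k) = (\<Sum>j<D. \<Sum>k<D. \<Sum>m<D. (f m j k :: complex))"
proof -
  have "(\<Sum>m<D. \<Sum>j<D. \<Sum>k<D. f m j k) = (\<Sum>j<D. \<Sum>m<D. \<Sum>k<D. f m j k)" by (rule sum.swap)
  also have "\<dots> = (\<Sum>j<D. \<Sum>k<D. \<Sum>m<D. f m j k)" by (rule sum.cong[OF refl], rule sum.swap)
  finally show ?thesis .
qed

lemma E12: "Ec D (int j * int m) * Ec D (- (int k * int m)) = Ec D (int m * (int j - int k))"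
  by (simp add: Ec_add[symmetric] algebra_simps)

lemma delta_sum1: fixes f :: "nat \<Rightarrow> complex" shows "j < D \<Longrightarrow> (\<Sum>k<D. f k * (if j = k then c else 0)) = f j * (c::complex)"
proof -
  assume j: "j < D"
  have "(\<Sum>k<D. f k * (if j = k then c else 0)) = (\<Sum>k<D. if j = k then f k * c else 0)"
    by (rule sum.cong) auto
  also have "\<dots> = f j * c" using j by (simp add: sum.delta sum.delta')
  finally show ?thesis .
qed

lemma delta_sum2: fixes f :: "nat \<Rightarrow> complex" shows "j < D \<Longrightarrow> (\<Sum>k<D. f k * (if k = j then c else 0)) = f j * (c::complex)"
proof -
  assume j: "j < D"
  have "(\<Sum>k<D. f k * (if k = j then c else 0)) = (\<Sum>k<D. if k = j then f k * c else 0)"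
    by (rule sum.cong) auto
  also have "\<dots> = f j * c" using j by (simp add: sum.delta sum.delta')
  finally show ?thesis .
qed

lemma parseval: assumes "D > 0"
  shows "of_real (vinner D a b) = (\<Sum>m<D. Gr D a m * Fr D b m)"
proof -
  let ?c = "complex_of_real (1 / real D)"
  have pw: "Gr D a m * Fr D b m = ?c * (\<Sum>j<D. \<Sum>k<D. of_real (a j) * of_real (b k) * Ec D (int m * (int j - int k)))" for m
  proof -
    have "Gr D a m * Fr D b m = (complex_of_real (1 / sqrt (real D)) * complex_of_real (1 / sqrt (real D))) *
       ((\<Sum>j<D. of_real (a j) * Ec D (int j * int m)) * (\<Sum>k<D. of_real (b k) * Ec D (- (int k * int m))))"
      unfolding Gr_def Fr_def by (simp add: algebra_simps)
    also have "\<dots> = ?c * (\<Sum>j<D. \<Sum>k<D. of_real (a j) * of_real (b k) * Ec D (int m * (int j - int k)))"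
      unfolding c_sq[OF assms] sum_product by (simp add: E12[symmetric] mult_ac)
    finally show ?thesis .
  qed
  have "(\<Sum>m<D. Gr D a m * Fr D b m) = ?c * (\<Sum>m<D. \<Sum>j<D. \<Sum>k<D. of_real (a j) * of_real (b k) * Ec D (int m * (int j - int k)))"
    by (simp only: pw sum_distrib_left)
  also have "\<dots> = ?c * (\<Sum>j<D. \<Sum>k<D. \<Sum>m<D. of_real (a j) * of_real (b k) * Ec D (int m * (int j - int k)))"
    by (subst swap3) (rule refl)
  also have "\<dots> = ?c * (\<Sum>j<D. \<Sum>k<D. of_real (a j) * of_real (b k) * (\<Sum>m<D. Ec D (int m * (int j - int k))))"
    by (simp only: sum_distrib_left)
  also have "\<dots> = ?c * (\<Sum>j<D. \<Sum>k<D. of_real (a j) * of_real (b k) * (if j = k then of_nat D else 0))"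
    by (intro arg_cong[where f="(*) ?c"] sum.cong refl) (simp add: orth2[OF assms])
  also have "\<dots> = ?c * (\<Sum>j<D. of_real (a j) * of_real (b j) * of_nat D)"
    by (intro arg_cong[where f="(*) ?c"] sum.cong refl) (simp add: delta_sum1)
  also have "\<dots> = of_real (vinner D a b)"
    using assms by (simp add: vinner_def sum_distrib_left sum_distrib_right)
  finally show ?thesis by simp
qed

lemma shift_inner: assumes "D > 0"
  shows "(\<Sum>d<D. complex_of_real (h ((d + k) mod D)) * Ec D (int d * int m))
       = Ec D (- (int k * int m)) * (\<Sum>j<D. of_real (h j) * Ec D (int j * int m))"
proof -
  have e: "Ec D (int d * int m) = Ec D (- (int k * int m)) * Ec D (int ((d + k) mod D) * int m)" for d
  proof -
    have "int D dvd (int ((d + k) mod D) - (int d + int k))"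
      by (simp add: of_nat_mod mod_eq_dvd_iff[symmetric])
    then have "int D dvd (int ((d + k) mod D) - (int d + int k)) * int m" by (rule dvd_mult2)
    then have "int D dvd - ((int ((d + k) mod D) - (int d + int k)) * int m)" by (simp only: dvd_minus_iff)
    moreover have "- ((int ((d + k) mod D) - (int d + int k)) * int m)
        = int d * int m - (- (int k * int m) + int ((d + k) mod D) * int m)" by (simp add: algebra_simps)
    ultimately have "(int d * int m) mod int D = (- (int k * int m) + int ((d + k) mod D) * int m) mod int D"
      by (simp add: mod_eq_dvd_iff)
    then show ?thesis using Ec_cong[OF assms] Ec_add by metis
  qed
  have "(\<Sum>d<D. complex_of_real (h ((d + k) mod D)) * Ec D (int d * int m))
      = Ec D (- (int k * int m)) * (\<Sum>d<D. of_real (h ((d + k) mod D)) * Ec D (int ((d + k) mod D) * int m))"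
    by (simp add: e sum_distrib_left algebra_simps)
  also have "\<dots> = Ec D (- (int k * int m)) * (\<Sum>j<D. of_real (h j) * Ec D (int j * int m))"
    using sum_shift[OF assms, of "\<lambda>j. of_real (h j) * Ec D (int j * int m)" k] by simp
  finally show ?thesis .
qed

lemma conv: assumes "D > 0"
  shows "Gr D (ccorr D h v) m = Fr D v m * Gr D h m"
proof -
  let ?s = "complex_of_real (1 / sqrt (real D))"
  have "Gr D (ccorr D h v) m = ?s * ?s * (\<Sum>d<D. \<Sum>k<D. of_real (v k) *
      (complex_of_real (h ((d + k) mod D)) * Ec D (int d * int m)))"
    unfolding Gr_def ccorr_def by (simp add: sum_distrib_left sum_distrib_right mult_ac)
  also have "\<dots> = ?s * ?s * (\<Sum>k<D. \<Sum>d<D. of_real (v k) *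
      (complex_of_real (h ((d + k) mod D)) * Ec D (int d * int m)))"
    by (subst sum.swap) (rule refl)
  also have "\<dots> = ?s * ?s * (\<Sum>k<D. of_real (v k) *
      (\<Sum>d<D. complex_of_real (h ((d + k) mod D)) * Ec D (int d * int m)))"
    by (simp only: sum_distrib_left)
  also have "\<dots> = ?s * ?s * (\<Sum>k<D. of_real (v k) * Ec D (- (int k * int m)) * (\<Sum>j<D. of_real (h j) * Ec D (int j * int m)))"
    by (simp only: shift_inner[OF assms] mult.assoc)
  also have "\<dots> = Fr D v m * Gr D h m"
    unfolding Fr_def Gr_def by (simp add: sum_distrib_left sum_distrib_right mult_ac)
  finally show ?thesis .
qed

lemma citer_F: assumes "D > 0"
  shows "Gr D (citer D u x l) m = Gr D x m * (\<Prod>i\<in>{1..l}. Fr D (u i) m)"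
  by (induction l) (simp_all add: conv[OF assms] prod.cl_ivl_Suc algebra_simps)

lemma phi_F: assumes "D > 0" "L \<ge> 1"
  shows "of_real (vinner D (citer D u x (L - 1)) (u L)) = (\<Sum>m<D. Gr D x m * (\<Prod>i\<in>{1..L}. Fr D (u i) m))"
proof -
  have L: "L = Suc (L - 1)" using assms by simp
  have "(\<Prod>i\<in>{1..L}. Fr D (u i) m) = (\<Prod>i\<in>{1..L-1}. Fr D (u i) m) * Fr D (u L) m" for m
    by (subst L, subst prod.cl_ivl_Suc) (use L in simp)
  then show ?thesis
    by (simp add: parseval[OF assms(1)] citer_F[OF assms(1)] algebra_simps)
qed

lemma norm_parseval: assumes "D > 0"
  shows "(\<Sum>d<D. (v d)^2) = (\<Sum>m<D. (cmod (Fr D v m))^2)"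
proof -
  have "complex_of_real (\<Sum>d<D. (v d)^2) = of_real (vinner D v v)"
    by (simp add: vinner_def power2_eq_square)
  also have "\<dots> = (\<Sum>m<D. Gr D v m * Fr D v m)" by (rule parseval[OF assms])
  also have "\<dots> = of_real (\<Sum>m<D. (cmod (Fr D v m))^2)"
    by (simp add: Gr_cnj complex_norm_square[symmetric] mult.commute)
  finally show ?thesis using of_real_eq_iff by blast
qed

lemma E12': "Ec D (int d * int m') * Ec D (- (int d * int m)) = Ec D (int d * (int m' - int m))"
  by (simp add: Ec_add[symmetric] algebra_simps)

lemma construct: assumes "D > 0" and herm: "\<And>m. m < D \<Longrightarrow> s ((D - m) mod D) = cnj (s m)"
  shows "\<exists>v. (\<forall>d\<ge>D. v d = 0) \<and> (\<forall>m<D. Fr D v m = s m)"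
proof -
  let ?s = "complex_of_real (1 / sqrt (real D))"
  define iv where "iv d = ?s * (\<Sum>m<D. s m * Ec D (int d * int m))" for d
  have real: "cnj (iv d) = iv d" for d
  proof -
    have "cnj (iv d) = ?s * (\<Sum>m<D. s ((D - m) mod D) * Ec D (int d * int ((D - m) mod D)))"
      unfolding iv_def using herm Ec_refl[OF assms(1)]
      by (simp add: Ec_cnj)
    also have "\<dots> = iv d"
      unfolding iv_def using sum_refl[OF assms(1), of "\<lambda>m. s m * Ec D (int d * int m)"] by simp
    finally show ?thesis .
  qed
  define v where "v d = (if d < D then Re (iv d) else 0)" for d
  have ofv: "complex_of_real (v d) = iv d" if "d < D" for d
    using that real[of d] by (simp add: v_def complex_eq_iff)
  have "Fr D v m = s m" if m: "m < D" for m
  proof -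
    have "Fr D v m = ?s * (\<Sum>d<D. iv d * Ec D (- (int d * int m)))"
      unfolding Fr_def using ofv by simp
    also have "\<dots> = ?s * ?s * (\<Sum>d<D. \<Sum>m'<D. s m' * Ec D (int d * (int m' - int m)))"
      unfolding iv_def
      by (simp add: sum_distrib_left sum_distrib_right mult_ac E12'[symmetric])
    also have "\<dots> = ?s * ?s * (\<Sum>m'<D. \<Sum>d<D. s m' * Ec D (int d * (int m' - int m)))"
      by (subst sum.swap) (rule refl)
    also have "\<dots> = ?s * ?s * (\<Sum>m'<D. s m' * (\<Sum>d<D. Ec D (int d * (int m' - int m))))"
      by (simp only: sum_distrib_left)
    also have "\<dots> = ?s * ?s * (\<Sum>m'<D. s m' * (if m' = m then of_nat D else 0))"
      using m by (intro arg_cong[where f="(*) (?s * ?s)"] sum.cong refl) (simp add: orth2[OF assms(1)])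
    also have "\<dots> = ?s * ?s * (s m * of_nat D)"
      using m by (simp add: delta_sum2)
    also have "\<dots> = s m" unfolding c_sq[OF assms(1)] using assms(1) by simp
    finally show ?thesis .
  qed
  moreover have "\<forall>d\<ge>D. v d = 0" by (simp add: v_def)
  ultimately show ?thesis by blast
qed

lemma Pconv_eq: assumes "\<forall>d\<ge>D. p d = 0" "\<forall>x. vinner D x p = vinner D (citer D u x (L - 1)) (u L)"
  shows "Pconv D L u = p"
  unfolding Pconv_def
proof (rule the_equality)
  show "(\<forall>d\<ge>D. p d = 0) \<and> (\<forall>x. vinner D x p = vinner D (citer D u x (L - 1)) (u L))" using assms by blast
next
  fix q assume q: "(\<forall>d\<ge>D. q d = 0) \<and> (\<forall>x. vinner D x q = vinner D (citer D u x (L - 1)) (u L))"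
  show "q = p"
  proof
    fix d show "q d = p d"
    proof (cases "d < D")
      case True
      let ?e = "\<lambda>k. if k = d then 1 else (0::real)"
      have ev: "vinner D ?e r = r d" for r
      proof -
        have "vinner D ?e r = (\<Sum>x<D. if x = d then r x else 0)"
          unfolding vinner_def by (rule sum.cong) auto
        then show ?thesis using True by simp
      qed
      have "vinner D ?e q = vinner D ?e p" using q assms by simp
      then show ?thesis by (simp add: ev)
    next
      case False then show ?thesis using q assms by simp
    qed
  qed
qed


lemma P1: "0 \<le> (c::real) \<Longrightarrow> (c^2) powr (1 / real L) = c powr (2 / real L)"
proof (cases "c = 0")
  case False
  assume c: "0 \<le> c"
  with False have "c > 0" by simp
  then have "c^2 = c powr 2" using powr_realpow[of c 2] by simp
  then have "(c^2) powr (1 / real L) = (c powr 2) powr (1 / real L)" by (simp only:)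
  also have "\<dots> = c powr (2 / real L)" by (simp add: powr_powr)
  finally show ?thesis .
qed simp

lemma P2: "0 \<le> (c::real) \<Longrightarrow> (c powr y)^2 = c powr (2 * y)"
proof (cases "c = 0")
  case False
  then show ?thesis using powr_power[of c y 2] by simp
qed simp

lemma P3: "0 < (c::real) \<Longrightarrow> (c powr (1 / real L))^(L - 1) = c powr (real (L - 1) / real L)"
  using powr_power[of c "1 / real L" "L - 1"] by simp

lemma P4: assumes "0 < (c::real)" "L \<ge> 1" shows "c / c powr (real (L - 1) / real L) = c powr (1 / real L)"
proof -
  have "1 - real (L - 1) / real L = 1 / real L" using assms(2) by (simp add: of_nat_diff field_simps)
  then have "c powr (1 / real L) = c powr 1 / c powr (real (L - 1) / real L)"
    by (metis powr_diff)
  then show ?thesis using assms(1) by simp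
qed

theorem lemma4:
  fixes L D :: nat and w :: "nat \<Rightarrow> real"
  assumes "L \<ge> 1" and "D \<ge> 1"
  shows "(\<exists>u. (\<forall>d<D. Pconv D L u d = w d) \<and>
              sqnorm_tuple D L u = real L * pnorm_pow D (2 / real L) (dft D w)) \<and>
         (\<forall>u. (\<forall>d<D. Pconv D L u d = w d) \<longrightarrow>
              real L * pnorm_pow D (2 / real L) (dft D w) \<le> sqnorm_tuple D L u)"
proof -
  have D0: "D > 0" using assms by simp
  have L0: "L > 0" using assms by simp
  define W where "W = dft D w"
  have W: "W = Fr D w" by (simp add: W_def dft_eq)
  have Wherm: "W ((D - m) mod D) = cnj (W m)" if "m < D" for m
    unfolding W using Fr_herm[OF D0 that] .
  have lower: "real L * pnorm_pow D (2 / real L) W \<le> sqnorm_tuple D L u"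
    if hu: "\<forall>d<D. Pconv D L u d = w d" for u
  proof -
    define P where "P m = (\<Prod>i\<in>{1..L}. Fr D (u i) m)" for m
    have Pherm: "P ((D - m) mod D) = cnj (P m)" if "m < D" for m
      unfolding P_def using Fr_herm[OF D0 that] by simp
    obtain v where v0: "\<forall>d\<ge>D. v d = 0" and vF: "\<forall>m<D. Fr D v m = P m"
      using construct[where s=P, OF D0 Pherm] by blast
    have "\<forall>x. vinner D x v = vinner D (citer D u x (L - 1)) (u L)"
    proof
      fix x
      have "complex_of_real (vinner D x v) = (\<Sum>m<D. Gr D x m * Fr D v m)" by (rule parseval[OF D0])
      also have "\<dots> = (\<Sum>m<D. Gr D x m * P m)" using vF by simp
      also have "\<dots> = complex_of_real (vinner D (citer D u x (L - 1)) (u L))"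
        unfolding phi_F[OF D0 assms(1)] P_def ..
      finally show "vinner D x v = vinner D (citer D u x (L - 1)) (u L)" by (simp only: of_real_eq_iff)
    qed
    then have Pc: "Pconv D L u = v" by (rule Pconv_eq[OF v0])
    have WP: "W m = P m" if "m < D" for m
    proof -
      have "W m = Fr D v m" unfolding W using hu Pc by (intro Fr_cong) simp
      then show ?thesis using vF that by simp
    qed
    have per_m: "real L * cmod (W m) powr (2 / real L) \<le> (\<Sum>i\<in>{1..L}. (cmod (Fr D (u i) m))^2)"
      if m: "m < D" for m
    proof -
      have "(\<Prod>i\<in>{1..L}. (cmod (Fr D (u i) m))^2) powr (1 / real (card {1..L}))
          \<le> (\<Sum>i\<in>{1..L}. (cmod (Fr D (u i) m))^2 / real (card {1..L}))"
        using L0 by (intro arith_geom_mean) auto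
      moreover have "(\<Prod>i\<in>{1..L}. (cmod (Fr D (u i) m))^2) = (cmod (W m))^2"
        unfolding WP[OF m] P_def by (simp only: prod_power_distrib[symmetric] prod_norm)
      ultimately have "(cmod (W m)) powr (2 / real L) \<le> (\<Sum>i\<in>{1..L}. (cmod (Fr D (u i) m))^2) / real L"
        by (simp add: P1 sum_divide_distrib)
      then show ?thesis using L0 by (simp add: field_simps)
    qed
    have "real L * pnorm_pow D (2 / real L) W = (\<Sum>m<D. real L * cmod (W m) powr (2 / real L))"
      by (simp add: pnorm_pow_def sum_distrib_left)
    also have "\<dots> \<le> (\<Sum>m<D. \<Sum>i\<in>{1..L}. (cmod (Fr D (u i) m))^2)"
      by (rule sum_mono) (use per_m in simp)
    also have "\<dots> = (\<Sum>i\<in>{1..L}. \<Sum>m<D. (cmod (Fr D (u i) m))^2)" by (subst sum.swap) (rule refl)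
    also have "\<dots> = sqnorm_tuple D L u"
      unfolding sqnorm_tuple_def by (rule sum.cong[OF refl]) (rule norm_parseval[OF D0, symmetric])
    finally show ?thesis .
  qed
  define a where "a m = cmod (W m)" for m
  define r where "r m = complex_of_real (a m powr (1 / real L))" for m
  define s1 where "s1 m = (if W m = 0 then 0 else W m / complex_of_real (a m powr (real (L - 1) / real L)))" for m
  have aherm: "a ((D - m) mod D) = a m" if "m < D" for m
    unfolding a_def using Wherm[OF that] by simp
  have rherm: "r ((D - m) mod D) = cnj (r m)" if "m < D" for m
    unfolding r_def using aherm[OF that] by simp
  have s1herm: "s1 ((D - m) mod D) = cnj (s1 m)" if "m < D" for m
    unfolding s1_def using aherm[OF that] Wherm[OF that] by simp
  obtain v1 where "\<forall>d\<ge>D. v1 d = 0" and v1F: "\<forall>m<D. Fr D v1 m = s1 m"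
    using construct[where s=s1, OF D0 s1herm] by blast
  obtain vr where "\<forall>d\<ge>D. vr d = 0" and vrF: "\<forall>m<D. Fr D vr m = r m"
    using construct[where s=r, OF D0 rherm] by blast
  define u where "u i = (if i = 1 then v1 else vr)" for i :: nat
  have uF: "Fr D (u i) m = (if i = 1 then s1 m else r m)" if "m < D" for i m
    unfolding u_def using v1F vrF that by simp
  have prodW: "(\<Prod>i\<in>{1..L}. Fr D (u i) m) = W m" if m: "m < D" for m
  proof -
    have I: "{1..L} = insert 1 {2..L}" using assms(1) by auto
    have "(\<Prod>i\<in>{1..L}. Fr D (u i) m) = s1 m * (\<Prod>i\<in>{2..L}. r m)"
      unfolding I using m by (simp add: uF)
    also have "\<dots> = s1 m * r m ^ (L - 1)" by simp
    also have "\<dots> = W m"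
    proof (cases "W m = 0")
      case True then show ?thesis by (simp add: s1_def)
    next
      case False
      then have ap: "a m > 0" by (simp add: a_def)
      have "r m ^ (L - 1) = complex_of_real (a m powr (real (L - 1) / real L))"
        unfolding r_def using P3[OF ap, of L] by (simp flip: of_real_power)
      moreover have "a m powr (real (L - 1) / real L) \<noteq> 0" using ap by simp
      ultimately show ?thesis using False by (simp add: s1_def)
    qed
    finally show ?thesis .
  qed
  define w' where "w' d = (if d < D then w d else 0)" for d
  have "\<forall>x. vinner D x w' = vinner D (citer D u x (L - 1)) (u L)"
  proof
    fix x
    have "complex_of_real (vinner D x w') = (\<Sum>m<D. Gr D x m * Fr D w' m)" by (rule parseval[OF D0])
    also have "\<dots> = (\<Sum>m<D. Gr D x m * W m)"
      unfolding W by (intro sum.cong refl arg_cong[where f="(*) _"] Fr_cong) (simp add: w'_def)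
    also have "\<dots> = (\<Sum>m<D. Gr D x m * (\<Prod>i\<in>{1..L}. Fr D (u i) m))" using prodW by simp
    also have "\<dots> = complex_of_real (vinner D (citer D u x (L - 1)) (u L))"
      unfolding phi_F[OF D0 assms(1)] ..
    finally show "vinner D x w' = vinner D (citer D u x (L - 1)) (u L)" by (simp only: of_real_eq_iff)
  qed
  then have Pc: "Pconv D L u = w'" by (intro Pconv_eq) (simp_all add: w'_def)
  have norms: "(\<Sum>d<D. (u i d)^2) = (\<Sum>m<D. a m powr (2 / real L))" if "i \<in> {1..L}" for i
  proof -
    have "(cmod (Fr D (u i) m))^2 = a m powr (2 / real L)" if m: "m < D" for m
    proof (cases "W m = 0")
      case True
      then show ?thesis using m by (simp add: uF s1_def r_def a_def)
    next
      case False
      then have ap: "a m > 0" by (simp add: a_def)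
      have r2: "(cmod (r m))^2 = a m powr (2 / real L)"
        unfolding r_def using P2[of "a m" "1 / real L"] ap by simp
      have "cmod (s1 m) = a m / a m powr (real (L - 1) / real L)"
        using False ap by (simp add: s1_def a_def norm_divide)
      also have "\<dots> = a m powr (1 / real L)" by (rule P4[OF ap assms(1)])
      finally have "(cmod (s1 m))^2 = a m powr (2 / real L)"
        using P2[of "a m" "1 / real L"] ap by simp
      then show ?thesis using r2 m by (simp add: uF)
    qed
    then show ?thesis unfolding norm_parseval[OF D0, of "u i"] by simp
  qed
  have "sqnorm_tuple D L u = real L * pnorm_pow D (2 / real L) W"
    unfolding sqnorm_tuple_def pnorm_pow_def using norms by (simp add: a_def)
  moreover have "\<forall>d<D. Pconv D L u d = w d" by (simp add: Pc w'_def)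
  ultimately show ?thesis using lower unfolding W_def by blast
qed

end
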